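(* Let $N\ge 1$ and $0<s<1$. Then \[ \lim_{p\to\infty} \Big(\mathfrak{m}_{s,p}(\mathbb{R}^N)\Big)^\frac{1}{p}=1. \]
   Context: For $p>N/s$: $[\varphi]_{W^{s,p}(\mathbb{R}^N)}=\left(\iint_{\mathbb{R}^N\times\mathbb{R}^N}\frac{|\varphi(x)-\varphi(y)|^p}{|x-y|^{N+s\,p}}dx\,dy\right)^{1/p}$; $[\varphi]_{C^{0,\alpha}(\mathbb{R}^N)}=\sup_{x\ne y}\frac{|\varphi(x)-\varphi(y)|}{|x-y|^\alpha}$; $\alpha_{s,p}=s-N/p$; $\mathfrak{m}_{s,p}(\mathbb{R}^N)=\inf\{[\varphi]^p_{W^{s,p}(\mathbb{R}^N)}:\varphi\in C^\infty_0(\mathbb{R}^N),\ [\varphi]_{C^{0,\alpha_{s,p}}(\mathbb{R}^N)}=1\}$. *)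

theory Defs
  imports "HOL-Analysis.Analysis"
begin

text \<open>C-infinity smoothness: all iterated Frechet derivatives exist.
  D vs x is the iterated derivative in the directions listed in vs.\<close>
definition smooth_fun :: "('a::euclidean_space \<Rightarrow> real) \<Rightarrow> bool" where
  "smooth_fun f \<longleftrightarrow> (\<exists>D :: 'a list \<Rightarrow> 'a \<Rightarrow> real. D [] = f \<and>
      (\<forall>vs x. (D vs has_derivative (\<lambda>h. D (h # vs) x)) (at x)))"

definition test_fun :: "('a::euclidean_space \<Rightarrow> real) \<Rightarrow> bool" where
  "test_fun f \<longleftrightarrow> smooth_fun f \<and> compact (closure {x. f x \<noteq> 0})"

definition gagliardo_pow :: "real \<Rightarrow> real \<Rightarrow> ('a::euclidean_space \<Rightarrow> real) \<Rightarrow> ennreal" where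
  "gagliardo_pow s p f = (\<integral>\<^sup>+ z. ennreal (\<bar>f (fst z) - f (snd z)\<bar> powr p /
       norm (fst z - snd z) powr (real DIM('a) + s * p)) \<partial>(lborel \<Otimes>\<^sub>M (lborel :: 'a measure)))"

definition holder_semi :: "real \<Rightarrow> ('a::real_normed_vector \<Rightarrow> real) \<Rightarrow> ereal" where
  "holder_semi \<alpha> f = (SUP z \<in> {z. fst z \<noteq> snd z}.
       ereal (\<bar>f (fst z) - f (snd z)\<bar> / norm (fst z - snd z) powr \<alpha>))"

definition alpha_sp :: "'a::euclidean_space itself \<Rightarrow> real \<Rightarrow> real \<Rightarrow> real" where
  "alpha_sp _ s p = s - real DIM('a) / p"

definition m_sp :: "'a::euclidean_space itself \<Rightarrow> real \<Rightarrow> real \<Rightarrow> ennreal" where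
  "m_sp T s p = (INF f \<in> {f :: 'a \<Rightarrow> real. test_fun f \<and> holder_semi (alpha_sp T s p) f = 1}.
       gagliardo_pow s p f)"

end

theory Submission
  imports Defs "HOL-Computational_Algebra.Polynomial"
begin

definition phi :: "real poly \<Rightarrow> real \<Rightarrow> real" where
  "phi q t = (if t > 0 then poly q (1/t) * exp (-1/t) else 0)"

definition dphi :: "real poly \<Rightarrow> real poly" where
  "dphi q = [:0,0,1:] * (q - pderiv q)"

lemma poly_exp_tendsto: "((\<lambda>u. poly r u * exp (-u)) \<longlongrightarrow> (0::real)) at_top"
proof -
  have "((\<lambda>u. \<Sum>i\<le>degree r. coeff r i * (u ^ i / exp u)) \<longlongrightarrow> (\<Sum>i\<le>degree r. coeff r i * 0)) at_top"
    by (intro tendsto_sum tendsto_mult tendsto_const tendsto_power_div_exp_0)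
  moreover have "\<And>u. (\<Sum>i\<le>degree r. coeff r i * (u ^ i / exp u)) = poly r u * exp (-u)"
  proof -
    fix u :: real
    have "(\<Sum>i\<le>degree r. coeff r i * (u ^ i / exp u)) = (\<Sum>i\<le>degree r. coeff r i * u ^ i) / exp u"
      by (simp add: sum_divide_distrib)
    then show "(\<Sum>i\<le>degree r. coeff r i * (u ^ i / exp u)) = poly r u * exp (-u)"
      by (simp add: poly_altdef exp_minus divide_inverse)
  qed
  ultimately show ?thesis by simp
qed

lemma phi_right0: "((\<lambda>t. phi q t / t) \<longlongrightarrow> 0) (at_right 0)"
proof -
  have "((\<lambda>t. poly (pCons 0 q) (inverse t) * exp (-(inverse t))) \<longlongrightarrow> (0::real)) (at_right 0)"
    by (rule filterlim_compose[OF poly_exp_tendsto filterlim_inverse_at_top_right])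
  then show ?thesis
    apply (rule Lim_transform_eventually)
    apply (simp add: eventually_at_right_field)
    apply (rule exI[of _ 1])
    apply (auto simp: phi_def field_simps)
    done
qed

lemma phi_left0: "((\<lambda>t. phi q t / t) \<longlongrightarrow> 0) (at_left 0)"
proof -
  have "((\<lambda>t. 0::real) \<longlongrightarrow> 0) (at_left 0)" by simp
  then show ?thesis
    apply (rule Lim_transform_eventually)
    apply (simp add: eventually_at_left_field)
    apply (rule exI[of _ "-1"])
    apply (auto simp: phi_def)
    done
qed

lemma phi_deriv: "(phi q has_real_derivative phi (dphi q) t) (at t)"
proof -
  consider "t > 0" | "t < 0" | "t = 0" by linarith
  then show ?thesis
  proof cases
    case 1
    have d: "((\<lambda>t. poly q (1/t) * exp (-1/t)) has_real_derivative
       (poly (pderiv q) (1/t) * (- 1 / t^2) * exp (-1/t) + poly q (1/t) * (exp (-1/t) * (1/t^2)))) (at t)"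
      using 1
      by (auto intro!: derivative_eq_intros simp: power2_eq_square field_simps)
    have e: "(poly (pderiv q) (1/t) * (- 1 / t^2) * exp (-1/t) + poly q (1/t) * (exp (-1/t) * (1/t^2)))
        = phi (dphi q) t"
      using 1 by (simp add: phi_def dphi_def algebra_simps power2_eq_square)
    show ?thesis
      apply (rule has_field_derivative_transform_within_open[where S="{0<..}", OF d[unfolded e]])
      using 1 by (auto simp: phi_def)
  next
    case 2
    have d: "((\<lambda>t. 0) has_real_derivative phi (dphi q) t) (at t)" using 2 by (simp add: phi_def)
    show ?thesis
      apply (rule has_field_derivative_transform_within_open[where S="{..<0}", OF d])
      using 2 by (auto simp: phi_def)
  next
    case 3
    have "((\<lambda>t. phi q t / t) \<longlongrightarrow> 0) (at 0)"
      using phi_left0 phi_right0 by (simp add: filterlim_split_at_real)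
    then have "((\<lambda>y. (phi q y - phi q 0) / (y - 0)) \<longlongrightarrow> 0) (at 0)"
      by (simp add: phi_def)
    then show ?thesis using 3 by (simp add: has_field_derivative_iff phi_def)
  qed
qed


inductive_set SS :: "('a::euclidean_space \<Rightarrow> real) set" where
  SS_const: "(\<lambda>x. c) \<in> SS"
| SS_lin: "(\<lambda>x. x \<bullet> b) \<in> SS"
| SS_bump: "(\<lambda>x. phi q (1 - x \<bullet> x)) \<in> SS"
| SS_add: "f \<in> SS \<Longrightarrow> g \<in> SS \<Longrightarrow> (\<lambda>x. f x + g x) \<in> SS"
| SS_mult: "f \<in> SS \<Longrightarrow> g \<in> SS \<Longrightarrow> (\<lambda>x. f x * g x) \<in> SS"

lemma bump_has_derivative:
  "((\<lambda>x::'a::euclidean_space. phi q (1 - x \<bullet> x)) has_derivative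
     (\<lambda>h. phi (dphi q) (1 - x \<bullet> x) * (x \<bullet> (-2 *\<^sub>R h)))) (at x)"
proof -
  have i: "((\<lambda>x::'a. 1 - x \<bullet> x) has_derivative (\<lambda>h. x \<bullet> (-2 *\<^sub>R h))) (at x)"
    by (auto intro!: derivative_eq_intros simp: inner_commute algebra_simps)
  have o: "(phi q has_derivative (*) (phi (dphi q) (1 - x \<bullet> x))) (at (1 - x \<bullet> x))"
    using phi_deriv[of q "1 - x \<bullet> x"] by (simp add: has_field_derivative_def)
  from diff_chain_at[OF i o] show ?thesis by (simp add: o_def)
qed

lemma SS_deriv:
  "f \<in> SS \<Longrightarrow> \<exists>f'. (\<forall>x. (f has_derivative f' x) (at x)) \<and> (\<forall>h. (\<lambda>x. f' x h) \<in> SS)"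
proof (induction rule: SS.induct)
  case (SS_const c)
  show ?case by (rule exI[of _ "\<lambda>x h. 0"]) (simp add: SS.SS_const)
next
  case (SS_lin b)
  show ?case
    by (rule exI[of _ "\<lambda>x h. h \<bullet> b"]) (auto intro!: derivative_eq_intros simp: SS.SS_const)
next
  case (SS_bump q)
  show ?case
    by (rule exI[of _ "\<lambda>x h. phi (dphi q) (1 - x \<bullet> x) * (x \<bullet> (-2 *\<^sub>R h))"])
      (intro conjI allI bump_has_derivative SS.SS_mult[OF SS.SS_bump SS.SS_lin])
next
  case (SS_add f g)
  then obtain f' g' where f: "\<forall>x. (f has_derivative f' x) (at x)" "\<forall>h. (\<lambda>x. f' x h) \<in> SS"
    and g: "\<forall>x. (g has_derivative g' x) (at x)" "\<forall>h. (\<lambda>x. g' x h) \<in> SS" by blast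
  show ?case
  proof (intro exI[of _ "\<lambda>x h. f' x h + g' x h"] conjI allI)
    fix x h
    show "((\<lambda>x. f x + g x) has_derivative (\<lambda>h. f' x h + g' x h)) (at x)"
      by (rule has_derivative_add) (use f g in blast)+
    show "(\<lambda>x. f' x h + g' x h) \<in> SS"
      by (rule SS.SS_add) (use f g in blast)+
  qed
next
  case (SS_mult f g)
  then obtain f' g' where f: "\<forall>x. (f has_derivative f' x) (at x)" "\<forall>h. (\<lambda>x. f' x h) \<in> SS"
    and g: "\<forall>x. (g has_derivative g' x) (at x)" "\<forall>h. (\<lambda>x. g' x h) \<in> SS" by blast
  show ?case
  proof (intro exI[of _ "\<lambda>x h. f x * g' x h + f' x h * g x"] conjI allI)
    fix x h
    show "((\<lambda>x. f x * g x) has_derivative (\<lambda>h. f x * g' x h + f' x h * g x)) (at x)"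
      by (rule has_derivative_mult) (use f g in blast)+
    show "(\<lambda>x. f x * g' x h + f' x h * g x) \<in> SS"
      by (rule SS.SS_add[OF SS.SS_mult[OF SS_mult.hyps(1)] SS.SS_mult[OF _ SS_mult.hyps(2)]])
        (use f g in blast)+
  qed
qed

definition dSS :: "('a::euclidean_space \<Rightarrow> real) \<Rightarrow> 'a \<Rightarrow> 'a \<Rightarrow> real" where
  "dSS f = (SOME f'. (\<forall>x. (f has_derivative f' x) (at x)) \<and> (\<forall>h. (\<lambda>x. f' x h) \<in> SS))"

lemma dSS: assumes "f \<in> SS"
  shows "\<forall>x. (f has_derivative dSS f x) (at x)" "\<forall>h. (\<lambda>x. dSS f x h) \<in> SS"
proof -
  have "(\<forall>x. (f has_derivative dSS f x) (at x)) \<and> (\<forall>h. (\<lambda>x. dSS f x h) \<in> SS)"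
    unfolding dSS_def by (rule someI_ex[OF SS_deriv[OF assms]])
  then show "\<forall>x. (f has_derivative dSS f x) (at x)" "\<forall>h. (\<lambda>x. dSS f x h) \<in> SS"
    by simp_all
qed

primrec Dit :: "('a::euclidean_space \<Rightarrow> real) \<Rightarrow> 'a list \<Rightarrow> 'a \<Rightarrow> real" where
  "Dit f [] = f"
| "Dit f (h # vs) = (\<lambda>x. dSS (Dit f vs) x h)"

lemma Dit_SS: "f \<in> SS \<Longrightarrow> Dit f vs \<in> SS"
proof (induction vs)
  case Nil
  then show ?case by simp
next
  case (Cons h vs)
  have "(\<lambda>x. dSS (Dit f vs) x h) \<in> SS" using dSS(2)[OF Cons.IH[OF Cons.prems]] by blast
  then show ?case by simp
qed

lemma SS_smooth: assumes "f \<in> SS" shows "smooth_fun f"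
  unfolding smooth_fun_def
proof (intro exI[of _ "Dit f"] conjI allI)
  show "Dit f [] = f" by simp
  fix vs x
  have "(Dit f vs has_derivative dSS (Dit f vs) x) (at x)"
    using dSS(1)[OF Dit_SS[OF assms]] by blast
  moreover have "dSS (Dit f vs) x = (\<lambda>h. Dit f (h # vs) x)" by (rule ext) simp
  ultimately show "(Dit f vs has_derivative (\<lambda>h. Dit f (h # vs) x)) (at x)" by (rule back_subst)
qed

definition gb :: "'a::euclidean_space \<Rightarrow> real" where
  "gb x = phi 1 (1 - x \<bullet> x)"

lemma gb_SS: "gb \<in> SS"
  unfolding gb_def by (rule SS_bump)

lemma gb_zero: "1 \<le> norm x \<Longrightarrow> gb x = 0"
proof -
  assume "1 \<le> norm x"
  then have "1 \<le> norm x ^ 2" by (simp add: one_le_power)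
  then have "1 \<le> x \<bullet> x" by (simp add: power2_norm_eq_inner)
  then show ?thesis by (simp add: gb_def phi_def)
qed

lemma gb_bound: "\<bar>gb x\<bar> \<le> 1"
  by (auto simp: gb_def phi_def)

lemma gb_0: "gb 0 = exp (-1)"
  by (simp add: gb_def phi_def)

lemma test_gb: "test_fun gb"
proof -
  have "{x. gb x \<noteq> 0} \<subseteq> cball 0 1"
    using gb_zero by (force simp: not_le)
  then have "bounded {x. gb x \<noteq> 0}" using bounded_cball bounded_subset by blast
  then show ?thesis unfolding test_fun_def using SS_smooth[OF gb_SS] compact_closure by blast
qed

lemma dphi_bound: "\<bar>phi (dphi 1) t\<bar> \<le> 4"
proof (cases "t > 0")
  case True
  define u where "u = 1 / t"
  have u: "u > 0" using True by (simp add: u_def)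
  have "exp u = exp (u/2) ^ 2" by (simp add: exp_double[symmetric])
  moreover have "u/2 \<le> exp (u/2)" using exp_ge_add_one_self[of "u/2"] by linarith
  ultimately have "(u/2)^2 \<le> exp u" using u power_mono[of "u/2" "exp(u/2)" 2] by simp
  then have "u^2 \<le> 4 * exp u" by (simp add: power_divide)
  then have "u^2 * exp (-u) \<le> 4" by (simp add: exp_minus field_simps)
  moreover have "phi (dphi 1) t = u^2 * exp (-u)"
    using True by (simp add: phi_def dphi_def u_def power2_eq_square)
  ultimately show ?thesis by simp
qed (simp add: phi_def)

lemma gb_lip: "\<bar>gb x - gb y\<bar> \<le> 8 * norm (x - y)"
proof -
  let ?d = "\<lambda>x h. phi (dphi 1) (1 - x \<bullet> x) * (x \<bullet> (-2 *\<^sub>R h))"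
  have "norm (gb x - gb y) \<le> 8 * norm (x - y)"
  proof (rule differentiable_bound[where S=UNIV and f'="?d"])
    fix x :: 'a
    show "(gb has_derivative ?d x) (at x within UNIV)"
      unfolding gb_def using bump_has_derivative by simp
    show "onorm (?d x) \<le> 8"
    proof (rule onorm_le)
      fix h :: 'a
      show "norm (?d x h) \<le> 8 * norm h"
      proof (cases "x \<bullet> x < 1")
        case True
        then have "norm x \<le> 1" by (simp add: norm_eq_sqrt_inner)
        have "\<bar>x \<bullet> (-2 *\<^sub>R h)\<bar> \<le> norm x * norm (-2 *\<^sub>R h)" by (rule Cauchy_Schwarz_ineq2)
        also have "\<dots> \<le> 1 * (2 * norm h)" using \<open>norm x \<le> 1\<close> by (intro mult_mono) auto
        finally have "\<bar>x \<bullet> (-2 *\<^sub>R h)\<bar> \<le> 2 * norm h" by simp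
        then have "\<bar>phi (dphi 1) (1 - x \<bullet> x)\<bar> * \<bar>x \<bullet> (-2 *\<^sub>R h)\<bar> \<le> 4 * (2 * norm h)"
          using dphi_bound by (intro mult_mono) auto
        then show ?thesis by (simp add: abs_mult)
      next
        case False
        then show ?thesis by (simp add: phi_def)
      qed
    qed
  qed auto
  then show ?thesis by simp
qed

lemma nn_integral_translate:
  fixes K :: "'a::euclidean_space \<Rightarrow> ennreal" and x :: 'a
  assumes K: "K \<in> borel_measurable borel"
  shows "(\<integral>\<^sup>+y. K (y - x) \<partial>lborel) = (\<integral>\<^sup>+h. K h \<partial>lborel)"
proof -
  have "(\<integral>\<^sup>+h. K h \<partial>lborel) = (\<integral>\<^sup>+h. K h \<partial>(distr lborel borel ((+) (-x))))"
    by (simp add: lborel_distr_plus)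
  also have "\<dots> = (\<integral>\<^sup>+y. K (-x + y) \<partial>lborel)"
    by (rule nn_integral_distr) (use K in auto)
  finally show ?thesis by simp
qed

lemma tonelli_fst:
  fixes K :: "'a::euclidean_space \<Rightarrow> ennreal" and A :: "'a set"
  assumes K: "K \<in> borel_measurable borel" and A: "A \<in> sets borel"
  shows "(\<integral>\<^sup>+z. indicator A (fst z) * K (snd z - fst z) \<partial>(lborel \<Otimes>\<^sub>M lborel))
     = emeasure lborel A * (\<integral>\<^sup>+h. K h \<partial>lborel)"
proof -
  have m: "(\<lambda>z. indicator A (fst z) * K (snd z - fst z)) \<in> borel_measurable (lborel \<Otimes>\<^sub>M (lborel::'a measure))"
    using K A by measurable
  have "(\<integral>\<^sup>+z. indicator A (fst z) * K (snd z - fst z) \<partial>(lborel \<Otimes>\<^sub>M lborel))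
      = (\<integral>\<^sup>+x. \<integral>\<^sup>+y. indicator A x * K (y - x) \<partial>lborel \<partial>lborel)"
    using lborel.nn_integral_fst[OF m] by simp
  also have "\<dots> = (\<integral>\<^sup>+x. indicator A x * (\<integral>\<^sup>+h. K h \<partial>lborel) \<partial>lborel)"
  proof (rule nn_integral_cong)
    fix x :: 'a
    have "(\<integral>\<^sup>+y. indicator A x * K (y - x) \<partial>lborel) = indicator A x * (\<integral>\<^sup>+y. K (y - x) \<partial>lborel)"
      by (rule nn_integral_cmult) (use K in measurable)
    then show "(\<integral>\<^sup>+y. indicator A x * K (y - x) \<partial>lborel) = indicator A x * (\<integral>\<^sup>+h. K h \<partial>lborel)"
      using nn_integral_translate[OF K] by simp
  qed
  also have "\<dots> = (\<integral>\<^sup>+h. K h \<partial>lborel) * emeasure lborel A"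
    using nn_integral_cmult_indicator[of A lborel "\<integral>\<^sup>+h. K h \<partial>lborel"] A
    by (simp add: mult.commute)
  finally show ?thesis by (simp add: mult.commute)
qed

lemma tonelli_snd:
  fixes K :: "'a::euclidean_space \<Rightarrow> ennreal" and A :: "'a set"
  assumes K: "K \<in> borel_measurable borel" and A: "A \<in> sets borel"
  shows "(\<integral>\<^sup>+z. indicator A (snd z) * K (fst z - snd z) \<partial>(lborel \<Otimes>\<^sub>M lborel))
     = emeasure lborel A * (\<integral>\<^sup>+h. K h \<partial>lborel)"
proof -
  have m: "(\<lambda>z. indicator A (snd z) * K (fst z - snd z)) \<in> borel_measurable (lborel \<Otimes>\<^sub>M (lborel::'a measure))"
    using K A by measurable
  have "(\<integral>\<^sup>+z. indicator A (snd z) * K (fst z - snd z) \<partial>(lborel \<Otimes>\<^sub>M lborel))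
      = (\<integral>\<^sup>+y. \<integral>\<^sup>+x. indicator A y * K (x - y) \<partial>lborel \<partial>lborel)"
    using lborel_pair.nn_integral_snd[OF m] by simp
  also have "\<dots> = (\<integral>\<^sup>+y. indicator A y * (\<integral>\<^sup>+h. K h \<partial>lborel) \<partial>lborel)"
  proof (rule nn_integral_cong)
    fix y :: 'a
    have "(\<integral>\<^sup>+x. indicator A y * K (x - y) \<partial>lborel) = indicator A y * (\<integral>\<^sup>+x. K (x - y) \<partial>lborel)"
      by (rule nn_integral_cmult) (use K in measurable)
    then show "(\<integral>\<^sup>+x. indicator A y * K (x - y) \<partial>lborel) = indicator A y * (\<integral>\<^sup>+h. K h \<partial>lborel)"
      using nn_integral_translate[OF K] by simp
  qed
  also have "\<dots> = (\<integral>\<^sup>+h. K h \<partial>lborel) * emeasure lborel A"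
    using nn_integral_cmult_indicator[of A lborel "\<integral>\<^sup>+h. K h \<partial>lborel"] A
    by (simp add: mult.commute)
  finally show ?thesis by (simp add: mult.commute)
qed

definition kf :: "real \<Rightarrow> real \<Rightarrow> 'a::euclidean_space \<Rightarrow> real" where
  "kf b \<beta> h = (if b < norm h then b powr \<beta> * norm h powr (-(real DIM('a) + \<beta>)) else 0)"

lemma kf_nonneg: "0 \<le> kf b \<beta> h"
  by (simp add: kf_def)

lemma kf_meas[measurable]: "(\<lambda>h. ennreal (kf b \<beta> (h::'a::euclidean_space))) \<in> borel_measurable borel"
  unfolding kf_def by measurable

lemma cball_borel[measurable]: "cball (x::'a::euclidean_space) r \<in> sets borel"
  by (simp add: borel_closed)

lemma ennreal_le_suminf: "f n \<le> (\<Sum>i. f i :: ennreal)"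
proof (rule ccontr)
  assume "\<not> f n \<le> (\<Sum>i. f i)"
  then have "(\<Sum>i. f i) < f n" by simp
  from ennreal_suminf_lessD[OF this, of n] show False by simp
qed

lemma dyadic_index:
  fixes b r :: real
  assumes b: "0 < b" and h: "b < r"
  shows "\<exists>n::nat. 2^n * b \<le> r \<and> r \<le> 2^(n+1) * b"
proof -
  define l where "l = log 2 (r / b)"
  have rb: "1 < r / b" using b h by simp
  have l0: "0 < l" unfolding l_def using rb by simp
  define n where "n = nat \<lfloor>l\<rfloor>"
  have nl: "real n \<le> l" "l < real n + 1" unfolding n_def using l0 by linarith+
  have "2 powr real n \<le> 2 powr l" using nl by simp
  also have "2 powr l = r / b" unfolding l_def using rb by simp
  finally have 1: "2^n \<le> r / b" by (simp add: powr_realpow)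
  have "r / b = 2 powr l" unfolding l_def using rb by simp
  also have "\<dots> \<le> 2 powr (real n + 1)" using nl by simp
  finally have 2: "r / b \<le> 2^(n+1)" by (simp add: powr_realpow[symmetric] powr_add)
  show ?thesis using 1 2 b by (intro exI[of _ n]) (simp add: field_simps)
qed

lemma dyadic_arith:
  fixes b \<beta> \<omega> :: real and n D :: nat
  assumes b: "0 < b"
  shows "b powr \<beta> * (2^n*b) powr (-(real D+\<beta>)) * (\<omega> * (2^(n+1)*b)^D) = \<omega> * 2^D * ((2::real) powr (-\<beta>))^n"
proof -
  have w: "0 < 2^n * b" using b by simp
  have 1: "(2^(n+1)*b) ^ D = 2 ^ D * (2^n * b) powr (real D)"
    using w by (simp add: powr_realpow power_mult_distrib)
  have 2: "(2^n * b) powr (-(real D + \<beta>)) * (2^n * b) powr (real D) = (2^n * b) powr (-\<beta>)"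
    using w by (simp add: powr_add[symmetric])
  have 3: "(2^n * b) powr (-\<beta>) = ((2::real) powr (-\<beta>))^n * b powr (-\<beta>)"
  proof -
    have "(2^n * b) powr (-\<beta>) = (2^n) powr (-\<beta>) * b powr (-\<beta>)" using b by (simp add: powr_mult)
    moreover have "((2::real)^n) powr (-\<beta>) = ((2::real) powr (-\<beta>))^n"
      by (simp add: powr_realpow[symmetric] powr_powr powr_power mult.commute)
    ultimately show ?thesis by simp
  qed
  have 4: "b powr \<beta> * b powr (-\<beta>) = 1"
    using b by (simp add: powr_add[symmetric])
  have "b powr \<beta> * (2^n*b) powr (-(real D+\<beta>)) * (\<omega> * (2^(n+1)*b)^D)
     = \<omega> * 2^D * (b powr \<beta> * ((2^n * b) powr (-(real D + \<beta>)) * (2^n * b) powr (real D)))"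
    unfolding 1 by (simp only: mult_ac)
  also have "\<dots> = \<omega> * 2^D * (((2::real) powr (-\<beta>))^n * (b powr \<beta> * b powr (-\<beta>)))"
    unfolding 2 3 by (simp only: mult_ac)
  also have "\<dots> = \<omega> * 2^D * ((2::real) powr (-\<beta>))^n" unfolding 4 by simp
  finally show ?thesis .
qed
lemma tail_finite:
  assumes b: "0 < b" and \<beta>: "0 < \<beta>"
  shows "(\<integral>\<^sup>+h. ennreal (kf b \<beta> h) \<partial>(lborel :: 'a::euclidean_space measure)) < \<infinity>"
proof -
  define N where "N = real DIM('a)"
  define \<omega> where "\<omega> = unit_ball_vol N"
  define c where "c n = b powr \<beta> * (2^n * b) powr (-(N + \<beta>))" for n :: nat
  define q where "q = (2::real) powr (-\<beta>)"
  have "(2::real) powr (-\<beta>) < 2 powr 0" by (rule powr_less_mono) (use \<beta> in auto)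
  then have q: "0 < q" "q < 1" unfolding q_def by auto
  have pt: "ennreal (kf b \<beta> h) \<le> (\<Sum>n. ennreal (c n) * indicator (cball (0::'a) (2^(n+1)*b)) h)" for h :: 'a
  proof (cases "b < norm h")
    case True
    then obtain n :: nat where n: "2^n * b \<le> norm h" "norm h \<le> 2^(n+1) * b"
      using dyadic_index[OF b] by blast
    have "norm h powr (-(N + \<beta>)) \<le> (2^n * b) powr (-(N + \<beta>))"
      by (rule powr_mono2') (use n b \<beta> N_def in auto)
    then have "kf b \<beta> h \<le> c n"
      using True b unfolding kf_def c_def N_def by (simp add: mult_left_mono)
    then have "ennreal (kf b \<beta> h) \<le> ennreal (c n) * indicator (cball (0::'a) (2^(n+1)*b)) h"
      using n by (simp add: indicator_def ennreal_leI)
    also have "\<dots> \<le> (\<Sum>n. ennreal (c n) * indicator (cball (0::'a) (2^(n+1)*b)) h)"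
      by (rule ennreal_le_suminf)
    finally show ?thesis .
  qed (simp add: kf_def)
  have "(\<integral>\<^sup>+h. ennreal (kf b \<beta> h) \<partial>(lborel :: 'a measure))
      \<le> (\<integral>\<^sup>+h. (\<Sum>n. ennreal (c n) * indicator (cball (0::'a) (2^(n+1)*b)) h) \<partial>lborel)"
    by (rule nn_integral_mono) (rule pt)
  also have "\<dots> = (\<Sum>n. \<integral>\<^sup>+h. ennreal (c n) * indicator (cball (0::'a) (2^(n+1)*b)) h \<partial>lborel)"
    by (rule nn_integral_suminf) measurable
  also have "\<dots> = (\<Sum>n. ennreal (\<omega> * 2 ^ DIM('a) * q ^ n))"
  proof (rule suminf_cong)
    fix n :: nat
    have w: "0 < 2^n * b" using b by simp
    have "(\<integral>\<^sup>+h. ennreal (c n) * indicator (cball (0::'a) (2^(n+1)*b)) h \<partial>lborel)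
        = ennreal (c n) * ennreal (\<omega> * (2^(n+1)*b) ^ DIM('a))"
      using b by (simp add: nn_integral_cmult_indicator emeasure_cball \<omega>_def N_def)
    also have "\<dots> = ennreal (c n * (\<omega> * (2^(n+1)*b) ^ DIM('a)))"
      by (rule ennreal_mult[symmetric]) (use b in \<open>auto simp: c_def \<omega>_def N_def\<close>)
    also have "c n * (\<omega> * (2^(n+1)*b) ^ DIM('a)) = \<omega> * 2 ^ DIM('a) * q ^ n"
      unfolding c_def q_def N_def by (rule dyadic_arith[OF b])
    finally show "(\<integral>\<^sup>+h. ennreal (c n) * indicator (cball (0::'a) (2^(n+1)*b)) h \<partial>lborel)
        = ennreal (\<omega> * 2 ^ DIM('a) * q ^ n)" .
  qed
  also have "\<dots> < \<infinity>"
  proof -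
    have "summable (\<lambda>n. \<omega> * 2 ^ DIM('a) * q ^ n)"
      using q by (intro summable_mult summable_geometric) simp
    moreover have "\<And>n. 0 \<le> \<omega> * 2 ^ DIM('a) * q ^ n" using q by (simp add: \<omega>_def N_def)
    ultimately show ?thesis using ennreal_suminf_neq_top by (simp add: top.not_eq_extremum)
  qed
  finally show ?thesis .
qed

lemma upper_pointwise:
  fixes f :: "'a::euclidean_space \<Rightarrow> real" and x y :: 'a
  assumes s: "0 < s" "s < 1" and p: "0 < p" "real DIM('a) \<le> p * (1 - s)"
    and \<beta>: "0 < \<beta>" "\<beta> \<le> s * p"
    and H: "\<And>x y. \<bar>f x - f y\<bar> \<le> norm (x - y) powr (s - real DIM('a) / p)"
    and L: "\<And>x y. \<bar>f x - f y\<bar> \<le> \<Lambda> * norm (x - y)"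
    and B: "\<And>x. \<bar>f x\<bar> \<le> M"
    and S: "\<And>x. 1 < norm x \<Longrightarrow> f x = 0"
    and a: "0 < a" "\<Lambda> * a powr (1 - s) \<le> 1" and b: "0 < b" "2 * M \<le> b powr s"
  shows "\<bar>f x - f y\<bar> powr p / norm (x - y) powr (real DIM('a) + s * p)
     \<le> (a powr (- real DIM('a)) + a powr (- 2 * real DIM('a))) * indicator (cball 0 (1+b)) x * indicator (cball 0 b) (y - x)
       + indicator (cball 0 1) x * kf b \<beta> (y - x) + indicator (cball 0 1) y * kf b \<beta> (x - y)"
    (is "?L \<le> ?R")
proof -
  define N where "N = real DIM('a)"
  define r where "r = norm (x - y)"
  define C1 where "C1 = a powr (-N) + a powr (-2*N)"
  have N0: "0 < N" unfolding N_def by simp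
  have C1: "0 \<le> C1" unfolding C1_def by simp
  have R0: "0 \<le> ?R" by (intro add_nonneg_nonneg mult_nonneg_nonneg kf_nonneg) (auto simp: C1_def)
  have ryx: "norm (y - x) = r" unfolding r_def by (simp add: norm_minus_commute)
  show ?thesis
  proof (cases "r = 0 \<or> (1 < norm x \<and> 1 < norm y)")
    case True
    then have d: "\<bar>f x - f y\<bar> = 0" using S unfolding r_def by auto
    have "?L = 0" by (simp only: d) simp
    then show ?thesis using R0 by linarith
  next
    case False
    then have r0: "0 < r" and xy: "norm x \<le> 1 \<or> norm y \<le> 1" unfolding r_def by auto
    show ?thesis
    proof (cases "b < r")
      case True
      have M0: "\<bar>f x - f y\<bar> \<le> 2 * M" using B[of x] B[of y] by linarith
      have "?L \<le> (2 * M) powr p / r powr (N + s * p)"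
        unfolding r_def N_def
        by (intro divide_right_mono powr_mono2) (use p M0 in auto)
      also have "\<dots> \<le> (b powr s) powr p / r powr (N + s * p)"
        by (intro divide_right_mono powr_mono2) (use p M0 b in auto)
      also have "\<dots> = r powr (-N) * (b / r) powr (s * p)"
        using r0 b by (simp add: powr_powr powr_divide powr_add powr_minus field_simps)
      also have "\<dots> \<le> r powr (-N) * (b / r) powr \<beta>"
        by (intro mult_left_mono powr_mono') (use \<beta> True b r0 in auto)
      also have "\<dots> = kf b \<beta> (y - x)"
      proof -
        have "r powr (-(N+\<beta>)) = r powr (-N - \<beta>)" by simp
        also have "\<dots> = r powr (-N) / r powr \<beta>" by (rule powr_diff)
        finally have e: "r powr (-(N+\<beta>)) = r powr (-N) / r powr \<beta>" .
        have "r powr (-N) * (b / r) powr \<beta> = b powr \<beta> * (r powr (-N) / r powr \<beta>)"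
          using r0 b by (simp add: powr_divide)
        then show ?thesis using True ryx by (simp add: kf_def N_def powr_diff)
      qed
      finally have 1: "?L \<le> kf b \<beta> (y - x)" .
      have "kf b \<beta> (x - y) = kf b \<beta> (y - x)" by (simp add: kf_def norm_minus_commute)
      then have "kf b \<beta> (y - x) \<le> indicator (cball 0 1) x * kf b \<beta> (y - x) + indicator (cball 0 1) y * kf b \<beta> (x - y)"
        using xy kf_nonneg[of b \<beta> "y - x"] by (auto simp: indicator_def)
      moreover have "0 \<le> C1 * indicator (cball 0 (1+b)) x * indicator (cball 0 b) (y - x)"
        using C1 by simp
      ultimately show ?thesis using 1 unfolding C1_def N_def by linarith
    next
      case False
      then have rb: "r \<le> b" by simp
      have "norm x \<le> 1 + b"
        using xy rb b(1) norm_triangle_ineq2[of x y] unfolding r_def by (auto simp: algebra_simps)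
      then have R1: "C1 \<le> ?R"
        using rb ryx kf_nonneg[of b \<beta> "y - x"] kf_nonneg[of b \<beta> "x - y"]
        by (simp add: C1_def N_def indicator_def)
      have "?L \<le> C1"
      proof (cases "r \<le> a")
        case True
        have Lr: "\<bar>f x - f y\<bar> \<le> \<Lambda> * r" using L unfolding r_def .
        have "0 \<le> \<Lambda> * r" using Lr abs_ge_zero order_trans by blast
        then have \<Lambda>0: "0 \<le> \<Lambda>" using r0 by (simp add: zero_le_mult_iff)
        have "?L \<le> (\<Lambda> * r) powr p / r powr (N + s * p)"
          unfolding r_def N_def
          by (intro divide_right_mono powr_mono2) (use p Lr r_def in auto)
        also have "\<dots> = \<Lambda> powr p * r powr (p * (1 - s) - N)"
        proof -
          have "(\<Lambda> * r) powr p / r powr (N + s * p) = \<Lambda> powr p * (r powr p / r powr (N + s * p))"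
            using r0 \<Lambda>0 by (simp add: powr_mult)
          also have "r powr p / r powr (N + s * p) = r powr (p - (N + s * p))" by (rule powr_diff[symmetric])
          also have "p - (N + s * p) = p * (1 - s) - N" by (simp add: algebra_simps)
          finally show ?thesis .
        qed
        also have "\<dots> \<le> \<Lambda> powr p * a powr (p * (1 - s) - N)"
          by (intro mult_left_mono powr_mono2) (use True p r0 N_def in auto)
        also have "\<dots> = (\<Lambda> * a powr (1 - s)) powr p * a powr (-N)"
        proof -
          have "(\<Lambda> * a powr (1 - s)) powr p = \<Lambda> powr p * a powr ((1 - s) * p)"
            using a \<Lambda>0 by (simp add: powr_mult powr_powr)
          moreover have "a powr (p * (1 - s) - N) = a powr ((1 - s) * p) * a powr (-N)"
            by (simp add: powr_add[symmetric] mult.commute)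
          ultimately show ?thesis by (simp only: mult.assoc)
        qed
        also have "\<dots> \<le> 1 * a powr (-N)"
          by (intro mult_right_mono powr_le1) (use a \<Lambda>0 p in auto)
        also have "\<dots> \<le> C1" unfolding C1_def by simp
        finally show ?thesis .
      next
        case False
        have Hr: "\<bar>f x - f y\<bar> \<le> r powr (s - N / p)" using H unfolding r_def N_def .
        have "?L \<le> (r powr (s - N / p)) powr p / r powr (N + s * p)"
          unfolding r_def N_def
          by (intro divide_right_mono powr_mono2) (use p Hr r_def N_def in auto)
        also have "\<dots> = r powr (- 2 * N)"
        proof -
          have "(r powr (s - N / p)) powr p / r powr (N + s * p) = r powr ((s - N / p) * p) / r powr (N + s * p)"
            by (simp add: powr_powr)
          also have "\<dots> = r powr ((s - N / p) * p - (N + s * p))" by (rule powr_diff[symmetric])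
          also have "(s - N / p) * p - (N + s * p) = - 2 * N" using p by (simp add: field_simps)
          finally show ?thesis .
        qed
        also have "\<dots> \<le> a powr (- 2 * N)"
          by (rule powr_mono2') (use False a N0 in auto)
        also have "\<dots> \<le> C1" unfolding C1_def by simp
        finally show ?thesis .
      qed
      then show ?thesis using R1 by (simp add: C1_def N_def)
    qed
  qed
qed

lemma Phi_integral_finite:
  assumes C1: "0 \<le> C1" and b: "0 < b" and \<beta>: "0 < \<beta>"
  shows "(\<integral>\<^sup>+z. ennreal (C1 * indicator (cball 0 (1+b)) (fst z) * indicator (cball 0 b) (snd z - fst z)
       + indicator (cball 0 1) (fst z) * kf b \<beta> (snd z - fst z) + indicator (cball 0 1) (snd z) * kf b \<beta> (fst z - snd z))
       \<partial>(lborel \<Otimes>\<^sub>M (lborel :: 'a::euclidean_space measure))) < \<infinity>"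
proof -
  define K1 where "K1 = (\<lambda>h::'a. ennreal C1 * indicator (cball 0 b) h)"
  define K2 where "K2 = (\<lambda>h::'a. ennreal (kf b \<beta> h))"
  have K1m: "K1 \<in> borel_measurable borel" unfolding K1_def by measurable
  have K2m: "K2 \<in> borel_measurable borel" unfolding K2_def by measurable
  have eq: "ennreal (C1 * indicator (cball 0 (1+b)) (fst z) * indicator (cball 0 b) (snd z - fst z)
       + indicator (cball 0 1) (fst z) * kf b \<beta> (snd z - fst z) + indicator (cball 0 1) (snd z) * kf b \<beta> (fst z - snd z))
     = indicator (cball 0 (1+b)) (fst z) * K1 (snd z - fst z)
       + indicator (cball 0 1) (fst z) * K2 (snd z - fst z) + indicator (cball 0 1) (snd z) * K2 (fst z - snd z)"
    for z :: "'a \<times> 'a"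
  proof -
    have i1: "ennreal (C1 * indicator (cball 0 (1+b)) (fst z) * indicator (cball 0 b) (snd z - fst z))
       = indicator (cball 0 (1+b)) (fst z) * K1 (snd z - fst z)"
      unfolding K1_def by (simp add: indicator_def)
    have i2: "ennreal (indicator (cball 0 1) (fst z) * kf b \<beta> (snd z - fst z)) = indicator (cball 0 1) (fst z) * K2 (snd z - fst z)"
      unfolding K2_def by (simp add: indicator_def)
    have i3: "ennreal (indicator (cball 0 1) (snd z) * kf b \<beta> (fst z - snd z)) = indicator (cball 0 1) (snd z) * K2 (fst z - snd z)"
      unfolding K2_def by (simp add: indicator_def)
    have n1: "0 \<le> C1 * indicator (cball 0 (1+b)) (fst z) * indicator (cball 0 b) (snd z - fst z)"
      using C1 by simp
    have n2: "0 \<le> indicator (cball 0 1) (fst z) * kf b \<beta> (snd z - fst z)" by (simp add: kf_nonneg)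
    have n3: "0 \<le> indicator (cball 0 1) (snd z) * kf b \<beta> (fst z - snd z)" by (simp add: kf_nonneg)
    show ?thesis
      unfolding ennreal_plus[OF add_nonneg_nonneg[OF n1 n2] n3] ennreal_plus[OF n1 n2] i1 i2 i3 ..
  qed
  have "(\<integral>\<^sup>+z. indicator (cball 0 (1+b)) (fst z) * K1 (snd z - fst z)
       + indicator (cball 0 1) (fst z) * K2 (snd z - fst z) + indicator (cball 0 1) (snd z) * K2 (fst z - snd z)
       \<partial>(lborel \<Otimes>\<^sub>M (lborel :: 'a measure)))
     = (\<integral>\<^sup>+z. indicator (cball 0 (1+b)) (fst z) * K1 (snd z - fst z) \<partial>(lborel \<Otimes>\<^sub>M (lborel :: 'a measure)))
      + (\<integral>\<^sup>+z. indicator (cball 0 1) (fst z) * K2 (snd z - fst z) \<partial>(lborel \<Otimes>\<^sub>M (lborel :: 'a measure)))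
      + (\<integral>\<^sup>+z. indicator (cball 0 1) (snd z) * K2 (fst z - snd z) \<partial>(lborel \<Otimes>\<^sub>M (lborel :: 'a measure)))"
    using K1m K2m by (simp add: nn_integral_add)
  also have "\<dots> = emeasure lborel (cball (0::'a) (1+b)) * (\<integral>\<^sup>+h. K1 h \<partial>lborel)
      + emeasure lborel (cball (0::'a) 1) * (\<integral>\<^sup>+h. K2 h \<partial>lborel)
      + emeasure lborel (cball (0::'a) 1) * (\<integral>\<^sup>+h. K2 h \<partial>lborel)"
    using K1m K2m by (simp add: tonelli_fst tonelli_snd)
  also have "\<dots> < \<infinity>"
  proof -
    have "(\<integral>\<^sup>+h. K1 h \<partial>lborel) = ennreal C1 * emeasure lborel (cball (0::'a) b)"
      unfolding K1_def by (simp add: nn_integral_cmult_indicator)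
    then have i1: "(\<integral>\<^sup>+h. K1 h \<partial>lborel) < \<infinity>" using b by (simp add: emeasure_cball ennreal_mult_less_top)
    have i2: "(\<integral>\<^sup>+h. K2 h \<partial>lborel) < \<infinity>" unfolding K2_def by (rule tail_finite[OF b \<beta>])
    have e1: "emeasure lborel (cball (0::'a) (1+b)) < \<infinity>" "emeasure lborel (cball (0::'a) 1) < \<infinity>"
      using b by (simp_all add: emeasure_cball)
    show ?thesis using i1 i2 e1 by (simp add: ennreal_mult_less_top)
  qed
  finally show ?thesis by (simp add: eq)
qed

lemma lower_alg:
  fixes A r g p N s e :: real
  assumes r: "0 < r" and p: "0 < p" and N: "0 \<le> N" and s: "0 < s" "s \<le> 1"
    and g: "0 < g" and A: "A = (1 - 3*g) * r powr (s - N/p)" and g3: "3 * g < 1"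
    and e: "1 - e/2 \<le> (1 - 3*g) / (1 + 2*g)" and e2: "e < 2"
  shows "(1 - e/2) powr p * r powr (-2*N) / (1 + 2*g) powr N \<le> A powr p / (r * (1 + 2*g)) powr (N + s*p)"
proof -
  have g1: "1 \<le> 1 + 2*g" "0 < 1 - 3*g" using g g3 by auto
  have "A powr p = (1 - 3*g) powr p * r powr ((s - N/p) * p)"
    unfolding A using g1 r by (simp add: powr_mult powr_powr)
  also have "(s - N/p) * p = s * p - N" using p by (simp add: field_simps)
  finally have Ap: "A powr p = (1 - 3*g) powr p * r powr (s * p - N)" .
  have D: "(r * (1 + 2*g)) powr (N + s*p) = r powr (N + s*p) * (1 + 2*g) powr (N + s*p)"
    using r g1 by (simp add: powr_mult)
  have D2: "(1 + 2*g) powr (N + s*p) \<le> (1 + 2*g) powr N * (1 + 2*g) powr p"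
  proof -
    have "(1 + 2*g) powr (N + s*p) \<le> (1 + 2*g) powr (N + p)"
      by (rule powr_mono) (use s p g1 in \<open>auto intro: mult_left_le_one_le\<close>)
    then show ?thesis by (simp add: powr_add)
  qed
  have rr: "r powr (s * p - N) / r powr (N + s*p) = r powr (-2*N)"
  proof -
    have "r powr (s * p - N) / r powr (N + s*p) = r powr (s * p - N - (N + s*p))" by (rule powr_diff[symmetric])
    also have "s * p - N - (N + s*p) = -2*N" by simp
    finally show ?thesis .
  qed
  have q: "(1 - e/2) powr p \<le> (1 - 3*g) powr p / (1 + 2*g) powr p"
  proof -
    have "(1 - e/2) powr p \<le> ((1 - 3*g) / (1 + 2*g)) powr p"
      by (rule powr_mono2) (use p e e2 in auto)
    then show ?thesis using g1 by (simp add: powr_divide)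
  qed
  have pos: "0 < (1 + 2*g) powr N" "0 < (1 + 2*g) powr p" "0 < r powr (N + s*p)" "0 < r powr (-2*N)"
    "0 < (1 - 3*g) powr p" using g1 r by auto
  have "(1 - e/2) powr p * r powr (-2*N) / (1 + 2*g) powr N
      \<le> (1 - 3*g) powr p / (1 + 2*g) powr p * r powr (-2*N) / (1 + 2*g) powr N"
    using q pos by (intro divide_right_mono mult_right_mono) auto
  also have "\<dots> = (1 - 3*g) powr p * (r powr (s * p - N) / r powr (N + s*p)) / ((1 + 2*g) powr N * (1 + 2*g) powr p)"
    unfolding rr by (simp add: field_simps)
  also have "\<dots> \<le> (1 - 3*g) powr p * (r powr (s * p - N) / r powr (N + s*p)) / (1 + 2*g) powr (N + s*p)"
    using D2 pos by (intro divide_left_mono) (auto simp: rr)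
  also have "\<dots> = A powr p / (r * (1 + 2*g)) powr (N + s*p)"
    unfolding Ap D using pos by (simp add: field_simps)
  finally show ?thesis .
qed

lemma holder_le:
  assumes "holder_semi \<alpha> f = 1" and "0 < \<alpha>"
  shows "\<bar>f x - f y\<bar> \<le> norm (x - y) powr \<alpha>"
proof (cases "x = y")
  case True then show ?thesis by simp
next
  case False
  then have "ereal (\<bar>f x - f y\<bar> / norm (x - y) powr \<alpha>) \<le> holder_semi \<alpha> f"
  proof -
    have m: "(x, y) \<in> {z. fst z \<noteq> snd z}" using False by simp
    show ?thesis unfolding holder_semi_def
      using SUP_upper[OF m, of "\<lambda>z. ereal (\<bar>f (fst z) - f (snd z)\<bar> / norm (fst z - snd z) powr \<alpha>)"] by simp
  qed
  then have "\<bar>f x - f y\<bar> / norm (x - y) powr \<alpha> \<le> 1" using assms by simp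
  moreover have "0 < norm (x - y) powr \<alpha>" using False by simp
  ultimately show ?thesis by (simp add: divide_le_eq)
qed

lemma lower_core:
  fixes f :: "'a::euclidean_space \<Rightarrow> real"
  assumes s: "0 < s" "s < 1" and e: "0 < e" "e < 1" and p: "0 < p"
    and al: "s / 2 \<le> s - real DIM('a) / p"
    and hol: "holder_semi (s - real DIM('a) / p) f = 1"
    and g: "g = e / 10" and d: "d = g powr (2 / s)"
  shows "ennreal ((unit_ball_vol (real DIM('a)) * d ^ DIM('a)) ^ 2 / (1 + 2*g) powr (real DIM('a))
           * (1 - e/2) powr p) \<le> gagliardo_pow s p f"
proof -
  define N where "N = real DIM('a)"
  define \<alpha> where "\<alpha> = s - N / p"
  define \<omega> where "\<omega> = unit_ball_vol N"
  have Np: "0 \<le> N / p" using p unfolding N_def by simp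
  have Ns: "N / p \<le> s / 2" using al unfolding N_def by linarith
  have \<alpha>: "0 < \<alpha>" "s/2 \<le> \<alpha>" "\<alpha> \<le> 1" using Ns s Np unfolding \<alpha>_def by linarith+
  have N0: "0 \<le> N" unfolding N_def by simp
  have H: "\<And>x y. \<bar>f x - f y\<bar> \<le> norm (x - y) powr \<alpha>"
    using holder_le[of \<alpha> f] hol \<alpha> unfolding \<alpha>_def N_def by blast
  have g0: "0 < g" "g < 1/10" using g e by auto
  have d0: "0 < d" using d g0 by simp
  have dg: "d \<le> g"
  proof -
    have "g powr (2/s) \<le> g powr 1" by (rule powr_mono') (use g0 s in auto)
    then show ?thesis using d g0 by simp
  qed
  have dal: "d powr \<alpha> \<le> g"
  proof -
    have "d powr \<alpha> \<le> d powr (s/2)" by (rule powr_mono') (use d0 dg g0 \<alpha> in auto)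
    also have "d powr (s/2) = g" using d g0 s by (simp add: powr_powr)
    finally show ?thesis .
  qed
  have "ereal (1 - g) < holder_semi \<alpha> f" using hol g0 unfolding \<alpha>_def N_def by simp
  then obtain z where z: "fst z \<noteq> snd z"
    and zr: "ereal (1 - g) < ereal (\<bar>f (fst z) - f (snd z)\<bar> / norm (fst z - snd z) powr \<alpha>)"
    unfolding holder_semi_def by (auto simp: less_SUP_iff)
  define x where "x = fst z"
  define y where "y = snd z"
  define r where "r = norm (x - y)"
  have r0: "0 < r" using z unfolding r_def x_def y_def by simp
  have big: "(1 - g) * r powr \<alpha> < \<bar>f x - f y\<bar>"
    using zr r0 unfolding x_def y_def r_def by (simp add: less_divide_eq)
  define t where "t = d * r"
  have t0: "0 < t" using d0 r0 unfolding t_def by simp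
  have tal: "t powr \<alpha> \<le> g * r powr \<alpha>"
    unfolding t_def using d0 r0 dal by (simp add: powr_mult mult_right_mono)
  define A where "A = (1 - 3*g) * r powr \<alpha>"
  define G where "G = (1 - e/2) powr p * r powr (-2*N) / (1 + 2*g) powr N"
  have G0: "0 \<le> G" unfolding G_def by simp
  have GF: "G \<le> \<bar>f x' - f y'\<bar> powr p / norm (x' - y') powr (N + s*p)"
    if x': "x' \<in> ball x t" and y': "y' \<in> ball y t" for x' y'
  proof -
    have n1: "norm (x - x') < t" "norm (y - y') < t" using x' y' by (auto simp: dist_norm)
    have m1: "norm (x - x') powr \<alpha> \<le> t powr \<alpha>" by (rule powr_mono2) (use n1 \<alpha> in auto)
    have m2: "norm (y - y') powr \<alpha> \<le> t powr \<alpha>" by (rule powr_mono2) (use n1 \<alpha> in auto)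
    have h1: "\<bar>f x - f x'\<bar> \<le> g * r powr \<alpha>"
      using H[of x x'] m1 tal by linarith
    have h2: "\<bar>f y - f y'\<bar> \<le> g * r powr \<alpha>"
      using H[of y y'] m2 tal by linarith
    have AD: "A \<le> \<bar>f x' - f y'\<bar>"
      using big h1 h2 unfolding A_def by (simp add: algebra_simps)
    have A0: "0 \<le> A" unfolding A_def using g0 by simp
    have e1: "norm (x' - y') \<le> norm (x' - x) + norm (x - y) + norm (y - y')"
    proof -
      have q: "norm (x' - y') = norm ((x' - x) + (x - y) + (y - y'))" by simp
      show ?thesis using q norm_triangle_ineq[of "(x' - x) + (x - y)" "y - y'"] norm_triangle_ineq[of "x' - x" "x - y"]
        by linarith
    qed
    have e2: "norm (x - y) \<le> norm (x - x') + norm (x' - y') + norm (y' - y)"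
    proof -
      have q: "norm (x - y) = norm ((x - x') + (x' - y') + (y' - y))" by simp
      show ?thesis using q norm_triangle_ineq[of "(x - x') + (x' - y')" "y' - y"] norm_triangle_ineq[of "x - x'" "x' - y'"]
        by linarith
    qed
    have nx: "norm (x' - x) < t" "norm (y' - y) < t" using n1 by (simp_all add: norm_minus_commute)
    have tg: "t \<le> g * r" using dg r0 unfolding t_def by (simp add: mult_right_mono)
    have gr: "g * r < r / 2" using g0 r0 by simp
    have np: "0 < norm (x' - y')" using e2 n1 nx tg gr unfolding r_def by linarith
    have nr: "norm (x' - y') \<le> r * (1 + 2*g)"
      using e1 n1 nx tg unfolding r_def by (simp add: algebra_simps) 
    have "G \<le> A powr p / (r * (1 + 2*g)) powr (N + s*p)"
    proof -
      have q: "(1 - e/2) * (1 + 2*g) \<le> 1 - 3*g"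
        using e mult_nonneg_nonneg[of e e] unfolding g by (simp add: algebra_simps)
      have ee: "1 - e/2 \<le> (1 - 3*g) / (1 + 2*g)" using q g0 by (simp add: le_divide_eq)
      show ?thesis
        unfolding G_def by (rule lower_alg[OF r0 p N0 s(1) less_imp_le[OF s(2)] g0(1) A_def[unfolded \<alpha>_def] _ ee]) (use g0 e g in auto)
    qed
    also have "\<dots> \<le> \<bar>f x' - f y'\<bar> powr p / (r * (1 + 2*g)) powr (N + s*p)"
      by (intro divide_right_mono powr_mono2) (use AD A0 p in auto)
    also have "\<dots> \<le> \<bar>f x' - f y'\<bar> powr p / norm (x' - y') powr (N + s*p)"
      by (intro divide_left_mono powr_mono2 mult_pos_pos) (use np nr s p N0 g0 in auto)
    finally show ?thesis .
  qed
  define S where "S = ball x t \<times> ball y t"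
  have Sm: "S \<in> sets (lborel \<Otimes>\<^sub>M (lborel :: 'a measure))" unfolding S_def by (intro pair_measureI) auto
  have "ennreal G * emeasure (lborel \<Otimes>\<^sub>M lborel) S
     = (\<integral>\<^sup>+w. ennreal G * indicator S w \<partial>(lborel \<Otimes>\<^sub>M lborel))"
    using Sm by (simp add: nn_integral_cmult_indicator)
  also have "\<dots> \<le> gagliardo_pow s p f"
    unfolding gagliardo_pow_def
  proof (rule nn_integral_mono)
    fix w :: "'a \<times> 'a"
    show "ennreal G * indicator S w \<le> ennreal (\<bar>f (fst w) - f (snd w)\<bar> powr p / norm (fst w - snd w) powr (real DIM('a) + s * p))"
    proof (cases "w \<in> S")
      case True
      then have "G \<le> \<bar>f (fst w) - f (snd w)\<bar> powr p / norm (fst w - snd w) powr (real DIM('a) + s * p)"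
        using GF[of "fst w" "snd w"] unfolding S_def N_def by (auto simp: mem_Times_iff)
      then show ?thesis using True by (simp add: ennreal_leI)
    qed simp
  qed
  also have "emeasure (lborel \<Otimes>\<^sub>M lborel) S = ennreal (\<omega> * t ^ DIM('a)) * ennreal (\<omega> * t ^ DIM('a))"
  proof -
    have "emeasure (lborel \<Otimes>\<^sub>M lborel) (ball x t \<times> ball y t) = emeasure lborel (ball x t) * emeasure lborel (ball y t)"
      by (rule lborel.emeasure_pair_measure_Times) auto
    then show ?thesis unfolding S_def using t0 by (simp add: emeasure_ball \<omega>_def N_def)
  qed
  also have "ennreal G * (ennreal (\<omega> * t ^ DIM('a)) * ennreal (\<omega> * t ^ DIM('a)))
      = ennreal ((\<omega> * d ^ DIM('a)) ^ 2 / (1 + 2*g) powr N * (1 - e/2) powr p)"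
  proof -
    have w0: "0 \<le> \<omega> * t ^ DIM('a)" using t0 by (simp add: \<omega>_def N_def)
    have "r powr (-2*N) * r ^ DIM('a) * r ^ DIM('a) = 1"
    proof -
      have "r ^ DIM('a) = r powr N" using r0 by (simp add: powr_realpow N_def)
      moreover have "r powr (-2*N + N + N) = r powr (-2*N) * r powr N * r powr N" by (simp only: powr_add)
      moreover have "r powr (-2*N + N + N) = 1" using r0 by simp
      ultimately show ?thesis by simp
    qed
    then have "G * ((\<omega> * t ^ DIM('a)) * (\<omega> * t ^ DIM('a))) = (\<omega> * d ^ DIM('a)) ^ 2 / (1 + 2*g) powr N * (1 - e/2) powr p"
      unfolding G_def t_def by (simp add: power_mult_distrib power2_eq_square field_simps)
    then show ?thesis using G0 w0 by (simp add: ennreal_mult[symmetric])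
  qed
  finally show ?thesis unfolding N_def \<omega>_def .
qed

lemma pairs_nonempty: "{z::'a::euclidean_space \<times> 'a. fst z \<noteq> snd z} \<noteq> {}"
proof -
  obtain e :: 'a where e: "e \<in> Basis" using nonempty_Basis by blast
  then have "e \<noteq> 0" by auto
  then have "(0, e) \<in> {z::'a \<times> 'a. fst z \<noteq> snd z}" by simp
  then show ?thesis by blast
qed

lemma holder_scale:
  fixes f :: "'a::euclidean_space \<Rightarrow> real"
  assumes c: "0 < c"
  shows "holder_semi \<alpha> (\<lambda>x. f x / c) = ereal (1/c) * holder_semi \<alpha> f"
proof -
  have "holder_semi \<alpha> (\<lambda>x. f x / c) = (SUP z\<in>{z::'a \<times> 'a. fst z \<noteq> snd z}.
       ereal (1/c) * ereal (\<bar>f (fst z) - f (snd z)\<bar> / norm (fst z - snd z) powr \<alpha>))"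
    unfolding holder_semi_def
  proof (rule SUP_cong)
    fix z :: "'a \<times> 'a"
    have "\<bar>f (fst z) / c - f (snd z) / c\<bar> = \<bar>f (fst z) - f (snd z)\<bar> / c"
      using c by (simp add: diff_divide_distrib[symmetric])
    then show "ereal (\<bar>f (fst z) / c - f (snd z) / c\<bar> / norm (fst z - snd z) powr \<alpha>) =
        ereal (1/c) * ereal (\<bar>f (fst z) - f (snd z)\<bar> / norm (fst z - snd z) powr \<alpha>)"
      by simp
  qed simp
  also have "\<dots> = ereal (1/c) * holder_semi \<alpha> f"
    unfolding holder_semi_def
    by (rule Sup_ereal_mult_left'[symmetric]) (use c pairs_nonempty in auto)
  finally show ?thesis .
qed

lemma gb_holder:
  assumes \<alpha>: "0 < \<alpha>" "\<alpha> \<le> 1"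
  shows "ereal (exp (-1)) \<le> holder_semi \<alpha> (gb :: 'a::euclidean_space \<Rightarrow> real)"
    "holder_semi \<alpha> (gb :: 'a \<Rightarrow> real) \<le> ereal 10"
proof -
  obtain e :: 'a where e: "e \<in> Basis" using nonempty_Basis by blast
  have ne: "norm e = 1" using e by simp
  have "gb e = 0" by (rule gb_zero) (simp add: ne)
  then have "ereal (\<bar>gb (fst (0::'a, e)) - gb (snd (0::'a, e))\<bar> / norm (fst (0::'a, e) - snd (0::'a, e)) powr \<alpha>)
      = ereal (exp (-1))" using ne by (simp add: gb_0)
  moreover have "(0::'a, e) \<in> {z. fst z \<noteq> snd z}" using ne by auto
  ultimately show "ereal (exp (-1)) \<le> holder_semi \<alpha> (gb :: 'a \<Rightarrow> real)"
    unfolding holder_semi_def by (metis (no_types, lifting) SUP_upper)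
  show "holder_semi \<alpha> (gb :: 'a \<Rightarrow> real) \<le> ereal 10"
    unfolding holder_semi_def
  proof (rule SUP_least)
    fix z :: "'a \<times> 'a" assume z: "z \<in> {z. fst z \<noteq> snd z}"
    define r where "r = norm (fst z - snd z)"
    have r0: "0 < r" using z unfolding r_def by auto
    have "\<bar>gb (fst z) - gb (snd z)\<bar> \<le> 10 * r powr \<alpha>"
    proof (cases "r \<le> 1")
      case True
      have "r = r powr 1" using r0 by simp
      also have "\<dots> \<le> r powr \<alpha>" by (rule powr_mono') (use True r0 \<alpha> in auto)
      finally have "r \<le> r powr \<alpha>" .
      moreover have "\<bar>gb (fst z) - gb (snd z)\<bar> \<le> 8 * r" using gb_lip unfolding r_def by blast
      moreover have "0 \<le> r powr \<alpha>" by simp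
      ultimately show ?thesis by linarith
    next
      case False
      then have "1 \<le> r powr \<alpha>" using \<alpha> by (simp add: ge_one_powr_ge_zero)
      moreover have "\<bar>gb (fst z) - gb (snd z)\<bar> \<le> 2"
        using gb_bound[of "fst z"] gb_bound[of "snd z"] by linarith
      ultimately show ?thesis by linarith
    qed
    then have "\<bar>gb (fst z) - gb (snd z)\<bar> / r powr \<alpha> \<le> 10"
      using r0 by (simp add: divide_le_eq)
    then show "ereal (\<bar>gb (fst z) - gb (snd z)\<bar> / norm (fst z - snd z) powr \<alpha>) \<le> ereal 10"
      unfolding r_def by simp
  qed
qed

lemma upper_bound:
  assumes s: "0 < s" "s < 1"
  shows "\<exists>K P. K < \<infinity> \<and> (\<forall>p\<ge>P. m_sp TYPE('a::euclidean_space) s p \<le> K)"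
proof -
  define N where "N = real DIM('a)"
  have N0: "0 < N" unfolding N_def by simp
  define P where "P = 2 * N / s + N / (1 - s) + 1"
  define \<beta> where "\<beta> = s * P"
  define a where "a = (1 / (8 * exp 1)) powr (1 / (1 - s))"
  define b where "b = (2 * exp 1) powr (1 / s)"
  define C1 where "C1 = a powr (- real DIM('a)) + a powr (- 2 * real DIM('a))"
  define K where "K = (\<integral>\<^sup>+z. ennreal (C1 * indicator (cball 0 (1+b)) (fst z) * indicator (cball 0 b) (snd z - fst z)
       + indicator (cball 0 1) (fst z) * kf b \<beta> (snd z - fst z) + indicator (cball 0 1) (snd z) * kf b \<beta> (fst z - snd z))
       \<partial>(lborel \<Otimes>\<^sub>M (lborel :: 'a measure)))"
  have P0: "0 < P" unfolding P_def using N0 s by (simp add: add_pos_nonneg)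
  have \<beta>0: "0 < \<beta>" unfolding \<beta>_def using s P0 by simp
  have a0: "0 < a" unfolding a_def by simp
  have b0: "0 < b" unfolding b_def by simp
  have C10: "0 \<le> C1" unfolding C1_def by simp
  have Kfin: "K < \<infinity>" unfolding K_def by (rule Phi_integral_finite[OF C10 b0 \<beta>0])
  have apow: "a powr (1 - s) = 1 / (8 * exp 1)" unfolding a_def using s by (simp add: powr_powr)
  have bpow: "b powr s = 2 * exp 1" unfolding b_def using s by (simp add: powr_powr)
  have main: "m_sp TYPE('a) s p \<le> K" if p: "P \<le> p" for p
  proof -
    have p0: "0 < p" using p P0 by simp
    define \<alpha> where "\<alpha> = s - N / p"
    have Np: "N / p \<le> s / 2"
    proof -
      have "2 * N / s \<le> p" using p unfolding P_def using N0 s by (smt (verit) divide_nonneg_pos)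
      then have "2 * N \<le> p * s" using s by (simp add: divide_le_eq)
      then show ?thesis using p0 by (simp add: divide_le_eq field_simps)
    qed
    have Np1: "N \<le> p * (1 - s)"
    proof -
      have "N / (1 - s) \<le> p" using p unfolding P_def using N0 s by (smt (verit) divide_nonneg_pos)
      then show ?thesis using s by (simp add: divide_le_eq mult.commute)
    qed
    have Np0: "0 \<le> N / p" using N0 p0 by simp
    have \<alpha>: "0 < \<alpha>" "\<alpha> \<le> 1" "s / 2 \<le> \<alpha>" unfolding \<alpha>_def using Np Np0 s by linarith+
    have \<beta>p: "\<beta> \<le> s * p" unfolding \<beta>_def using p s by simp
    obtain Lr where Lr: "holder_semi \<alpha> (gb :: 'a \<Rightarrow> real) = ereal Lr"
      using gb_holder[where 'a='a, OF \<alpha>(1,2)] by (cases "holder_semi \<alpha> (gb :: 'a \<Rightarrow> real)") auto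
    have Lr1: "exp (-1) \<le> Lr" using gb_holder(1)[where 'a='a, OF \<alpha>(1,2)] Lr by simp
    have Lr0: "0 < Lr" using Lr1 by (smt (verit) exp_gt_zero)
    have iL: "1 / Lr \<le> exp 1"
      using Lr1 Lr0 by (simp add: divide_le_eq exp_minus field_simps)
    define f where "f = (\<lambda>x::'a. gb x / Lr)"
    have holf: "holder_semi \<alpha> f = 1"
      unfolding f_def using Lr0 by (simp add: holder_scale Lr)
    have tf: "test_fun f"
    proof -
      have "(\<lambda>x. gb x * (1 / Lr)) \<in> SS" by (rule SS_mult[OF gb_SS SS_const])
      then have "f \<in> SS" unfolding f_def by simp
      moreover have "{x. f x \<noteq> 0} = {x. gb x \<noteq> 0}" unfolding f_def using Lr0 by auto
      ultimately show ?thesis using test_gb SS_smooth unfolding test_fun_def by auto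
    qed
    have fin: "f \<in> {f :: 'a \<Rightarrow> real. test_fun f \<and> holder_semi (alpha_sp TYPE('a) s p) f = 1}"
      using tf holf unfolding alpha_sp_def \<alpha>_def N_def by simp
    have "m_sp TYPE('a) s p \<le> gagliardo_pow s p f"
      unfolding m_sp_def by (rule INF_lower[OF fin])
    also have "\<dots> \<le> K"
      unfolding gagliardo_pow_def K_def
    proof (rule nn_integral_mono)
      fix z :: "'a \<times> 'a"
      have "\<bar>f (fst z) - f (snd z)\<bar> powr p / norm (fst z - snd z) powr (real DIM('a) + s * p)
        \<le> C1 * indicator (cball 0 (1+b)) (fst z) * indicator (cball 0 b) (snd z - fst z)
         + indicator (cball 0 1) (fst z) * kf b \<beta> (snd z - fst z) + indicator (cball 0 1) (snd z) * kf b \<beta> (fst z - snd z)"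
        unfolding C1_def
      proof (rule upper_pointwise[where \<Lambda>="8 / Lr" and M="1 / Lr"])
        show "0 < s" "s < 1" "0 < p" "0 < \<beta>" "\<beta> \<le> s * p" "0 < a" "0 < b"
          using s p0 \<beta>0 \<beta>p a0 b0 by auto
        show "real DIM('a) \<le> p * (1 - s)" using Np1 unfolding N_def .
        show "\<And>x y. \<bar>f x - f y\<bar> \<le> norm (x - y) powr (s - real DIM('a) / p)"
          using holder_le[OF holf \<alpha>(1)] unfolding \<alpha>_def N_def .
        show "\<And>x y. \<bar>f x - f y\<bar> \<le> 8 / Lr * norm (x - y)"
        proof -
          fix x y :: 'a
          have "\<bar>f x - f y\<bar> = \<bar>gb x - gb y\<bar> / Lr"
            unfolding f_def using Lr0 by (simp add: diff_divide_distrib[symmetric])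
          also have "\<dots> \<le> 8 * norm (x - y) / Lr" using gb_lip[of x y] Lr0 by (simp add: divide_right_mono)
          finally show "\<bar>f x - f y\<bar> \<le> 8 / Lr * norm (x - y)" by simp
        qed
        show "\<And>x. \<bar>f x\<bar> \<le> 1 / Lr"
        proof -
          fix x :: 'a
          show "\<bar>f x\<bar> \<le> 1 / Lr"
            unfolding f_def using gb_bound[of x] Lr0 by (simp add: divide_right_mono)
        qed
        show "\<And>x. 1 < norm x \<Longrightarrow> f x = 0"
        proof -
          fix x :: 'a assume "1 < norm x"
          then have "gb x = 0" by (intro gb_zero) simp
          then show "f x = 0" unfolding f_def by simp
        qed
        show "8 / Lr * a powr (1 - s) \<le> 1"
        proof -
          have "exp (-1) * exp 1 \<le> Lr * exp 1" by (rule mult_right_mono[OF Lr1]) simp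
          then have le: "1 \<le> Lr * exp 1" by (simp add: exp_add[symmetric])
          show ?thesis unfolding apow using le Lr0 by (simp add: field_simps)
        qed
        show "2 * (1 / Lr) \<le> b powr s"
          unfolding bpow using iL by simp
      qed
      then show "ennreal (\<bar>f (fst z) - f (snd z)\<bar> powr p / norm (fst z - snd z) powr (real DIM('a) + s * p))
        \<le> ennreal (C1 * indicator (cball 0 (1+b)) (fst z) * indicator (cball 0 b) (snd z - fst z)
         + indicator (cball 0 1) (fst z) * kf b \<beta> (snd z - fst z) + indicator (cball 0 1) (snd z) * kf b \<beta> (fst z - snd z))"
        by (rule ennreal_leI)
    qed
    finally show ?thesis .
  qed
  show ?thesis using Kfin main by blast
qed

lemma powr_tendsto_0:
  fixes \<rho> :: real
  assumes "0 < \<rho>" "\<rho> < 1"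
  shows "((\<lambda>p. \<rho> powr p) \<longlongrightarrow> 0) at_top"
proof -
  have l: "ln \<rho> < 0" using assms by simp
  have "filterlim (\<lambda>p. ln \<rho> * p) at_bot at_top"
    by (rule filterlim_tendsto_neg_mult_at_bot[OF tendsto_const l filterlim_ident])
  then have "((\<lambda>p. exp (ln \<rho> * p)) \<longlongrightarrow> 0) at_top"
    by (rule filterlim_compose[OF exp_at_bot])
  then show ?thesis using assms by (simp add: powr_def mult.commute)
qed

lemma lower_bound:
  assumes s: "0 < s" "s < 1" and e: "0 < e" "e < 1"
  shows "\<exists>P. \<forall>p\<ge>P. ennreal ((1 - e) powr p) \<le> m_sp TYPE('a::euclidean_space) s p"
proof -
  define N where "N = real DIM('a)"
  define g where "g = e / 10"
  define d where "d = g powr (2 / s)"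
  define C where "C = (unit_ball_vol (real DIM('a)) * d ^ DIM('a)) ^ 2 / (1 + 2*g) powr (real DIM('a))"
  define \<rho> where "\<rho> = (1 - e) / (1 - e/2)"
  have g0: "0 < g" unfolding g_def using e by simp
  have d0: "0 < d" unfolding d_def using g0 by simp
  have v0: "0 < unit_ball_vol (real DIM('a)) * d ^ DIM('a)" using d0 by simp
  have C0: "0 < C" unfolding C_def by (intro divide_pos_pos zero_less_power) (use v0 g0 in auto)
  have \<rho>: "0 < \<rho>" "\<rho> < 1" unfolding \<rho>_def using e by (auto simp: divide_less_eq)
  have ev1: "eventually (\<lambda>p. \<rho> powr p < C) at_top"
    using order_tendstoD(2)[OF powr_tendsto_0[OF \<rho>] C0] .
  have ev2: "eventually (\<lambda>p. 2 * N / s + 1 \<le> p) at_top" by (rule eventually_ge_at_top)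
  obtain P where P: "\<And>p. P \<le> p \<Longrightarrow> \<rho> powr p < C \<and> 2 * N / s + 1 \<le> p"
    using eventually_conj[OF ev1 ev2] unfolding eventually_at_top_linorder by blast
  have "ennreal ((1 - e) powr p) \<le> m_sp TYPE('a) s p" if p: "P \<le> p" for p
  proof -
    have pP: "\<rho> powr p < C" "2 * N / s + 1 \<le> p" using P[OF p] by auto
    have N0: "0 \<le> N" unfolding N_def by simp
    have p0: "0 < p" using pP(2) N0 s by (smt (verit) divide_nonneg_pos)
    have al: "s / 2 \<le> s - real DIM('a) / p"
    proof -
      have "2 * N / s \<le> p" using pP(2) by simp
      then have "2 * N \<le> p * s" using s by (simp add: divide_le_eq)
      then have "N / p \<le> s / 2" using p0 by (simp add: divide_le_eq field_simps)
      then show ?thesis unfolding N_def by simp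
    qed
    have key: "(1 - e) powr p \<le> C * (1 - e/2) powr p"
    proof -
      have "(1 - e) powr p = \<rho> powr p * (1 - e/2) powr p"
        unfolding \<rho>_def using e by (simp add: powr_divide)
      also have "\<dots> \<le> C * (1 - e/2) powr p"
        using pP(1) by (intro mult_right_mono) auto
      finally show ?thesis .
    qed
    show ?thesis
      unfolding m_sp_def
    proof (rule INF_greatest)
      fix f :: "'a \<Rightarrow> real"
      assume "f \<in> {f. test_fun f \<and> holder_semi (alpha_sp TYPE('a) s p) f = 1}"
      then have hol: "holder_semi (s - real DIM('a) / p) f = 1" by (simp add: alpha_sp_def)
      have "ennreal (C * (1 - e/2) powr p) \<le> gagliardo_pow s p f"
        unfolding C_def by (rule lower_core[OF s e p0 al hol g_def d_def])
      moreover have "ennreal ((1 - e) powr p) \<le> ennreal (C * (1 - e/2) powr p)"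
        using key by (rule ennreal_leI)
      ultimately show "ennreal ((1 - e) powr p) \<le> gagliardo_pow s p f" by (rule order_trans[rotated])
    qed
  qed
  then show ?thesis by blast
qed

theorem proposition8p4:
  fixes s :: real
  assumes "0 < s" and "s < 1"
  shows "((\<lambda>p. enn2real (m_sp TYPE('a::euclidean_space) s p) powr (1 / p)) \<longlongrightarrow> 1) at_top"
proof -
  have s: "0 < s" "s < 1" using assms by auto
  obtain K P where K: "K < \<infinity>" and KP: "\<And>p. P \<le> p \<Longrightarrow> m_sp TYPE('a) s p \<le> K"
    using upper_bound[OF s, where 'a='a] by blast
  have Kt: "K < top" using K by simp
  define Kr where "Kr = max (enn2real K) 1"
  have Kr: "1 \<le> Kr" unfolding Kr_def by simp
  have m_le: "enn2real (m_sp TYPE('a) s p) \<le> Kr" if "P \<le> p" for p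
    using enn2real_mono[OF KP[OF that] Kt] unfolding Kr_def by simp
  show ?thesis
  proof (rule order_tendstoI)
    fix a :: real assume a: "1 < a"
    have inv: "((\<lambda>p::real. 1 / p) \<longlongrightarrow> 0) at_top"
      using tendsto_inverse_0_at_top[OF filterlim_ident] by (simp add: inverse_eq_divide)
    have "((\<lambda>p. Kr powr (1 / p)) \<longlongrightarrow> Kr powr 0) at_top"
      by (intro tendsto_powr tendsto_const inv) (use Kr in auto)
    then have "((\<lambda>p. Kr powr (1 / p)) \<longlongrightarrow> 1) at_top" using Kr by simp
    from order_tendstoD(2)[OF this a]
    have ev1: "eventually (\<lambda>p. Kr powr (1 / p) < a) at_top" .
    have ev2: "eventually (\<lambda>p. max P 1 \<le> p) at_top" by (rule eventually_ge_at_top)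
    show "eventually (\<lambda>p. enn2real (m_sp TYPE('a) s p) powr (1 / p) < a) at_top"
      using ev1 ev2
    proof eventually_elim
      case (elim p)
      have "enn2real (m_sp TYPE('a) s p) powr (1 / p) \<le> Kr powr (1 / p)"
        by (rule powr_mono2) (use elim m_le in auto)
      then show ?case using elim by simp
    qed
  next
    fix a :: real assume a: "a < 1"
    define e where "e = min (1/2) ((1 - a) / 2)"
    have e: "0 < e" "e < 1" "a < 1 - e" unfolding e_def using a by (auto simp: min_def field_simps)
    obtain P2 where P2: "\<And>p. P2 \<le> p \<Longrightarrow> ennreal ((1 - e) powr p) \<le> m_sp TYPE('a) s p"
      using lower_bound[OF s e(1,2), where 'a='a] by blast
    have ev: "eventually (\<lambda>p. max (max P P2) 1 \<le> p) at_top" by (rule eventually_ge_at_top)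
    show "eventually (\<lambda>p. a < enn2real (m_sp TYPE('a) s p) powr (1 / p)) at_top"
      using ev
    proof eventually_elim
      case (elim p)
      have p0: "0 < p" using elim by simp
      have "enn2real (ennreal ((1 - e) powr p)) \<le> enn2real (m_sp TYPE('a) s p)"
        by (rule enn2real_mono[OF P2]) (use elim Kt KP[of p] in \<open>auto simp: top.not_eq_extremum le_less_trans\<close>)
      then have lo: "(1 - e) powr p \<le> enn2real (m_sp TYPE('a) s p)" by simp
      have "1 - e = ((1 - e) powr p) powr (1 / p)"
        using e p0 by (simp add: powr_powr)
      also have "\<dots> \<le> enn2real (m_sp TYPE('a) s p) powr (1 / p)"
        by (rule powr_mono2) (use lo p0 in auto)
      finally show ?case using e by linarith
    qed
  qed
qed

end
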